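(* Let $L_*\ge3$ and let $\{G_n\}_{n\in\mathbb N}$ be the replacement graphs of the iterated graph system $\mathfrak R(1,L_* )$. Then for every $m>1$, every non-collapsing path in $G_m$ contains at most two distinct vertices.
   Context: Graphs: $(V,E)$, $V$ finite non-empty, $E\subseteq V\times V$, $(x,y)\in E\Rightarrow(y,x)\notin E$; $\{x,y\}\in E$ means either orientation; a path is a sequence $[x_1,\dots,x_k]$ with $\{x_i,x_{i+1}\}\in E$. An iterated graph system consists of a connected graph $G_1=(S,E)$, a finite set $\mathcal T$ of types, a surjective typing $\mathfrak t:E\to\mathcal T$ and non-empty gluing rules $I_t\subseteq S\times S$. With $W_m=S^m$, $[w]_k=w_1\cdots w_k$ and $|w\wedge v|=\min\{k:[w]_k\ne[v]_k\}$ for distinct words of equal length, the replacement graphs $G_m=(W_m,E_m)$ are defined recursively: $(w,v)\in E_{m+1}$ iff either (1) $[w]_m=[v]_m$ and $(w_{m+1},v_{m+1})\in E$ (type $\mathfrak t(w_{m+1},v_{m+1})$), or (2) $([w]_m,[v]_m)\in E_m$ and $(w_{m+1},v_{m+1})\in I_{\mathfrak t([w]_m,[v]_m)}$ (type $\mathfrak t([w]_m,[v]_m)$). The system $\mathfrak R(1,L_* )$ has $S=\{1,\dots,L_*\}$, a single type $t_1$, edges $E=\{(k,k+1):1\le k<L_*\}$ all of type $t_1$, and $I_{t_1}=\{(L_*,1)\}$. For $n>1$, a path $[w^{(1)},\dots,w^{(k)}]$ in $G_n$ is non-collapsing if $|w^{(i)}\wedge w^{(i+1)}|<n$ for all $i=1,\dots,k-1$.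 *)

theory Defs
  imports Main
begin

text \<open>Iterated graph systems. Words of length m over S are lists;
 the prefix [w]_k is take k w.\<close>

definition words :: "'a set \<Rightarrow> nat \<Rightarrow> 'a list set" where
  "words S m = {w. length w = m \<and> set w \<subseteq> S}"

text \<open>Typed edge sets of the replacement graphs G_m (m \<ge> 1):
 a pair ((w,v),t) means (w,v) \<in> E_m and the edge has type t.\<close>

fun typed_edges ::
  "'a set \<Rightarrow> ('a \<times> 'a) set \<Rightarrow> ('a \<times> 'a \<Rightarrow> 't) \<Rightarrow> ('t \<Rightarrow> ('a \<times> 'a) set) \<Rightarrow> nat
     \<Rightarrow> (('a list \<times> 'a list) \<times> 't) set" where
  "typed_edges S E tp I 0 = {}"
| "typed_edges S E tp I (Suc 0) = {(([a], [b]), tp (a, b)) | a b. (a, b) \<in> E}"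
| "typed_edges S E tp I (Suc (Suc m)) =
     {((w @ [a], w @ [b]), tp (a, b)) | w a b. w \<in> words S (Suc m) \<and> (a, b) \<in> E}
   \<union> {((w @ [a], v @ [b]), t) | w v a b t. ((w, v), t) \<in> typed_edges S E tp I (Suc m) \<and> (a, b) \<in> I t}"

definition rep_edges ::
  "'a set \<Rightarrow> ('a \<times> 'a) set \<Rightarrow> ('a \<times> 'a \<Rightarrow> 't) \<Rightarrow> ('t \<Rightarrow> ('a \<times> 'a) set) \<Rightarrow> nat
     \<Rightarrow> ('a list \<times> 'a list) set" where
  "rep_edges S E tp I m = fst ` typed_edges S E tp I m"

definition is_path :: "'v set \<Rightarrow> ('v \<times> 'v) set \<Rightarrow> 'v list \<Rightarrow> bool" where
  "is_path V Ed xs \<longleftrightarrow> xs \<noteq> [] \<and> set xs \<subseteq> V \<and>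
     (\<forall>i. Suc i < length xs \<longrightarrow> ((xs ! i, xs ! Suc i) \<in> Ed \<or> (xs ! Suc i, xs ! i) \<in> Ed))"

definition wedge :: "'a list \<Rightarrow> 'a list \<Rightarrow> nat" where
  "wedge w v = (LEAST k. take k w \<noteq> take k v)"

definition non_collapsing :: "nat \<Rightarrow> 'a list list \<Rightarrow> bool" where
  "non_collapsing n xs \<longleftrightarrow> (\<forall>i. Suc i < length xs \<longrightarrow> wedge (xs ! i) (xs ! Suc i) < n)"

definition R1_S :: "nat \<Rightarrow> nat set" where "R1_S L = {1..L}"
definition R1_E :: "nat \<Rightarrow> (nat \<times> nat) set" where "R1_E L = {(k, k + 1) | k. 1 \<le> k \<and> k < L}"
definition R1_type :: "nat \<times> nat \<Rightarrow> unit" where "R1_type e = ()"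
definition R1_I :: "nat \<Rightarrow> unit \<Rightarrow> (nat \<times> nat) set" where "R1_I L t = {(L, 1)}"

definition R1_W :: "nat \<Rightarrow> nat \<Rightarrow> nat list set" where
  "R1_W L m = words (R1_S L) m"
definition R1_Edges :: "nat \<Rightarrow> nat \<Rightarrow> (nat list \<times> nat list) set" where
  "R1_Edges L m = rep_edges (R1_S L) (R1_E L) R1_type (R1_I L) m"

end

theory Submission
  imports Defs
begin

abbreviation "TT tp L \<equiv> typed_edges (R1_S L) (R1_E L) tp (R1_I L)"

lemma tt_len: "((x,y),t) \<in> TT tp L n \<Longrightarrow> length x = n \<and> length y = n"
proof (induction n arbitrary: x y t)
  case 0 then show ?case by simp
next
  case (Suc n)
  show ?case
  proof (cases n)
    case 0 then show ?thesis using Suc.prems by auto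
  next
    case (Suc k)
    then show ?thesis using Suc.prems Suc.IH by (auto simp: words_def)
  qed
qed

lemma tt_Suc_Suc: "((x,y),t) \<in> TT tp L (Suc (Suc k)) \<longleftrightarrow>
  (\<exists>w a. x = w@[a] \<and> y = w@[a+1] \<and> t = tp (a,a+1) \<and> length w = Suc k \<and> set w \<subseteq> {1..L} \<and> 1 \<le> a \<and> a < L) \<or>
  (\<exists>w v. x = w@[L] \<and> y = v@[1] \<and> ((w,v),t) \<in> TT tp L (Suc k))"
  by (auto simp: words_def R1_S_def R1_E_def R1_I_def)

lemma tt_unique: "((x,y),t) \<in> TT tp L n \<Longrightarrow> ((x',y'),t') \<in> TT tp L n \<Longrightarrow>
   (x = x' \<longrightarrow> y = y') \<and> (y = y' \<longrightarrow> x = x')"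
proof (induction n arbitrary: x y t x' y' t')
  case 0 then show ?case by simp
next
  case (Suc n)
  note P = Suc.prems and IHo = Suc.IH
  show ?case
  proof (cases n)
    case 0 then show ?thesis using P by (auto simp: R1_E_def)
  next
    case (Suc k)
    note nk = this
    have A: "((x,y),t) \<in> TT tp L (Suc (Suc k))" "((x',y'),t') \<in> TT tp L (Suc (Suc k))"
      using P by (simp_all only: nk)
    have IH: "\<And>x y t x' y' t'. ((x,y),t) \<in> TT tp L (Suc k) \<Longrightarrow> ((x',y'),t') \<in> TT tp L (Suc k) \<Longrightarrow>
   (x = x' \<longrightarrow> y = y') \<and> (y = y' \<longrightarrow> x = x')" using IHo nk by blast
    show ?thesis using A(1) A(2) unfolding tt_Suc_Suc
      apply (elim disjE exE conjE)
      using IH by force+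
  qed
qed

lemma wedge_ge:
  assumes "length x = Suc n" "length y = Suc n" "x \<noteq> y" "take n x = take n y"
  shows "wedge x y \<ge> Suc n"
proof (rule ccontr)
  assume "\<not> ?thesis"
  hence lt: "wedge x y \<le> n" by simp
  have ex: "\<exists>k. take k x \<noteq> take k y" using assms by (metis take_all order_refl)
  have "take (wedge x y) x \<noteq> take (wedge x y) y"
    unfolding wedge_def using LeastI_ex[OF ex] .
  moreover have "take (wedge x y) x = take (wedge x y) y"
    using assms(4) lt by (metis min.absorb1 take_take)
  ultimately show False by simp
qed

lemma step_decomp:
  assumes "((x,y),t) \<in> TT tp L (Suc (Suc k))" "wedge x y < Suc (Suc k)"
  shows "\<exists>w v. x = w@[L] \<and> y = v@[1] \<and> ((w,v),t) \<in> TT tp L (Suc k)"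
proof -
  have "\<not> (\<exists>w a. x = w@[a] \<and> y = w@[a+1] \<and> t = tp (a,a+1) \<and> length w = Suc k \<and> set w \<subseteq> {1..L} \<and> 1 \<le> a \<and> a < L)"
  proof
    assume "\<exists>w a. x = w@[a] \<and> y = w@[a+1] \<and> t = tp (a,a+1) \<and> length w = Suc k \<and> set w \<subseteq> {1..L} \<and> 1 \<le> a \<and> a < L"
    then obtain w a where h: "x = w@[a]" "y = w@[a+1]" "length w = Suc k" by blast
    have "wedge x y \<ge> Suc (Suc k)" by (rule wedge_ge) (use h in auto)
    with assms(2) show False by simp
  qed
  then show ?thesis using assms(1) unfolding tt_Suc_Suc by blast
qed

lemma key:
  assumes "(x = w@[L] \<and> y = v@[1] \<or> x = v@[1] \<and> y = w@[L])" "((w,v),t) \<in> TT tp L n"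
    "(y = w'@[L] \<and> z = v'@[1] \<or> y = v'@[1] \<and> z = w'@[L])" "((w',v'),t') \<in> TT tp L n"
    "L \<noteq> 1"
  shows "z = x"
  using assms tt_unique[OF assms(2) assms(4)] by auto

theorem lemma5p6:
  fixes L m :: nat and xs :: "nat list list"
  assumes "L \<ge> 3" and "m > 1"
    and "is_path (R1_W L m) (R1_Edges L m) xs"
    and "non_collapsing m xs"
  shows "card (set xs) \<le> 2"
proof -
  define k where "k = m - 2"
  have m: "m = Suc (Suc k)" using assms(2) unfolding k_def by simp
  have L1: "L \<noteq> 1" using assms(1) by simp
  have st: "\<exists>w v t. (xs!i = w@[L] \<and> xs!Suc i = v@[1] \<or> xs!i = v@[1] \<and> xs!Suc i = w@[L])
            \<and> ((w,v),t) \<in> TT R1_type L (Suc k)" if "Suc i < length xs" for i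
  proof -
    have e: "(xs ! i, xs ! Suc i) \<in> R1_Edges L m \<or> (xs ! Suc i, xs ! i) \<in> R1_Edges L m"
      using assms(3) that unfolding is_path_def by blast
    have wd: "wedge (xs ! i) (xs ! Suc i) < m" using assms(4) that unfolding non_collapsing_def by blast
    have wedge_sym: "wedge a b = wedge b a" for a b :: "nat list"
      unfolding wedge_def by (rule arg_cong[where f=Least]) auto
    from e show ?thesis
    proof
      assume "(xs ! i, xs ! Suc i) \<in> R1_Edges L m"
      then obtain p where p: "p \<in> TT R1_type L m" "(xs ! i, xs ! Suc i) = fst p"
        unfolding R1_Edges_def rep_edges_def by blast
      have "((xs ! i, xs ! Suc i), snd p) \<in> TT R1_type L m" using p by (metis prod.collapse)
      from step_decomp[OF this[unfolded m] wd[unfolded m]] show ?thesis by blast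
    next
      assume "(xs ! Suc i, xs ! i) \<in> R1_Edges L m"
      then obtain p where p: "p \<in> TT R1_type L m" "(xs ! Suc i, xs ! i) = fst p"
        unfolding R1_Edges_def rep_edges_def by blast
      have "((xs ! Suc i, xs ! i), snd p) \<in> TT R1_type L m" using p by (metis prod.collapse)
      moreover have "wedge (xs ! Suc i) (xs ! i) < Suc (Suc k)" using wd wedge_sym m by simp
      ultimately have "\<exists>w v. xs ! Suc i = w@[L] \<and> xs ! i = v@[1] \<and> ((w,v),snd p) \<in> TT R1_type L (Suc k)"
        using step_decomp m by blast
      then show ?thesis by blast
    qed
  qed
  have per: "xs ! Suc (Suc i) = xs ! i" if lt: "Suc (Suc i) < length xs" for i
  proof -
    have lt1: "Suc i < length xs" using lt by simp
    obtain w v t where a: "(xs!i = w@[L] \<and> xs!Suc i = v@[1] \<or> xs!i = v@[1] \<and> xs!Suc i = w@[L])"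
      "((w,v),t) \<in> TT R1_type L (Suc k)" using st[OF lt1] by blast
    obtain w' v' t' where b: "(xs!Suc i = w'@[L] \<and> xs!Suc (Suc i) = v'@[1] \<or> xs!Suc i = v'@[1] \<and> xs!Suc (Suc i) = w'@[L])"
      "((w',v'),t') \<in> TT R1_type L (Suc k)" using st[OF lt] by blast
    show ?thesis by (rule key[OF a b L1])
  qed
  have mod2: "\<forall>i. i < length xs \<longrightarrow> xs ! i = xs ! (i mod 2)" (is "\<forall>i. ?P i")
  proof
    fix i show "?P i"
    proof (induction i rule: nat_less_induct)
      case (1 n)
      show ?case
      proof (cases n)
        case (Suc n') note S = this
        show ?thesis
        proof (cases n')
          case (Suc j)
          show ?thesis
          proof
            assume "n < length xs"
            hence "xs ! n = xs ! j" using per[of j] S Suc by simp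
            also have "\<dots> = xs ! (j mod 2)" using 1 S Suc \<open>n < length xs\<close>
              by (metis Suc_lessD lessI)
            also have "j mod 2 = n mod 2" using S Suc by simp
            finally show "xs ! n = xs ! (n mod 2)" .
          qed
        qed (use S in simp)
      qed simp
    qed
  qed
  have "set xs \<subseteq> {xs ! 0, xs ! 1}"
  proof
    fix x assume "x \<in> set xs"
    then obtain i where "i < length xs" "x = xs ! i" by (metis in_set_conv_nth)
    with mod2 have "x = xs ! (i mod 2)" by blast
    moreover have "i mod 2 = 0 \<or> i mod 2 = 1" by auto
    ultimately show "x \<in> {xs ! 0, xs ! 1}" by auto
  qed
  hence "card (set xs) \<le> card {xs ! 0, xs ! 1}" by (rule card_mono[rotated]) simp
  also have "\<dots> \<le> 2" by (simp add: card_insert_if)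
  finally show ?thesis .
qed

end
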